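(* Let $c,d\in\mathbb{R}^n$ be distinct nonzero vectors such that the line segment $[c,d]$ does not contain $0$. Run the following iteration: if $c^Td>0$, terminate (declaring $0\notin[c,d]$); otherwise set $e=c-d$, $\beta=c^Te$, $d_+=d-(c^Td)\big(\frac{e}{\beta}-\frac{c}{\|c\|\sqrt\beta}\big)$, $c_+=c-(c^Tc)\big(\frac{e}{\beta}-\frac{c}{\|c\|\sqrt\beta}\big)$, then replace $c$ by $d_+$ and $d$ by $c_+$, and repeat. Then the iteration terminates (with the correct declaration $0\notin[c,d]$) after a number of iterations not exceeding $$\frac{\|c-d\|^4}{\|c\|^2\|d\|^2-(c^Td)^2},$$ where $c,d$ here denote the original vectors.
   Context: $[c,d]$ denotes the closed line segment joining $c$ and $d$; $\|\cdot\|$ is the Euclidean norm. *)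

theory Defs
  imports "HOL-Analysis.Analysis"
begin

definition seg_step :: "('a::real_inner) \<times> 'a \<Rightarrow> 'a \<times> 'a" where
  "seg_step p = (let c = fst p; d = snd p; e = c - d; \<beta> = c \<bullet> e;
                     w = (1 / \<beta>) *\<^sub>R e - (1 / (norm c * sqrt \<beta>)) *\<^sub>R c;
                     dp = d - (c \<bullet> d) *\<^sub>R w;
                     cp = c - (c \<bullet> c) *\<^sub>R w
                 in (dp, cp))"

definition seg_iter :: "nat \<Rightarrow> ('a::real_inner) \<times> 'a \<Rightarrow> 'a \<times> 'a" where
  "seg_iter k p = (seg_step ^^ k) p"

end

theory Submission
  imports Defs
begin

definition gram :: "'a::real_inner \<Rightarrow> 'a \<Rightarrow> real" where
  "gram u v = (u \<bullet> u) * (v \<bullet> v) - (u \<bullet> v)^2"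

lemma gram_sym: "gram u v = gram v u"
  unfolding gram_def by (simp add: inner_commute)

lemma gram_shift: "gram u (v + t *\<^sub>R u) = gram u v"
  unfolding gram_def by (simp add: inner_add inner_commute algebra_simps power2_eq_square)

lemma gram_comb: assumes "c \<bullet> r = 0"
  shows "gram (\<alpha> *\<^sub>R c + \<gamma> *\<^sub>R r) r = \<alpha>^2 * gram c r"
  using assms unfolding gram_def by (simp add: inner_add inner_commute algebra_simps power2_eq_square)

lemma step_facts:
  fixes c d :: "'a::real_inner"
  assumes G: "gram c d > 0" and z: "c \<bullet> d \<le> 0"
  defines "x \<equiv> c \<bullet> c" and "z \<equiv> c \<bullet> d" and "\<beta> \<equiv> c \<bullet> (c - d)"
  shows "(fst (seg_step (c,d)) - snd (seg_step (c,d))) \<bullet> (fst (seg_step (c,d)) - snd (seg_step (c,d))) = \<beta>"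
    "gram (fst (seg_step (c,d))) (snd (seg_step (c,d))) = (x / \<beta>) * gram c d"
    "\<beta> \<ge> x" "x > 0"
proof -
  have c0: "c \<noteq> 0" using G unfolding gram_def by auto
  have xpos: "x > 0" using c0 unfolding x_def by simp
  have bdef: "\<beta> = x - z" unfolding \<beta>_def x_def z_def by (simp add: inner_diff_right)
  have bge: "\<beta> \<ge> x" using bdef z z_def by simp
  have bpos: "\<beta> > 0" using bge xpos by simp
  define a where "a = norm c"
  define sq where "sq = sqrt \<beta>"
  have a2: "a^2 = x" unfolding a_def x_def by (simp add: power2_norm_eq_inner)
  have apos: "a > 0" using c0 a_def by simp
  have sq2: "sq^2 = \<beta>" unfolding sq_def using bpos by simp
  have sqpos: "sq > 0" unfolding sq_def using bpos by simp
  define e where "e = c - d"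
  define w where "w = (1 / \<beta>) *\<^sub>R e - (1 / (a * sq)) *\<^sub>R c"
  define dp where "dp = d - z *\<^sub>R w"
  define cp where "cp = c - x *\<^sub>R w"
  have S: "seg_step (c,d) = (dp, cp)"
    unfolding seg_step_def dp_def cp_def w_def e_def a_def sq_def \<beta>_def x_def z_def Let_def by simp
  have diff: "dp - cp = (- (\<beta> / (a * sq))) *\<^sub>R c"
  proof -
    have "dp - cp = (x - z) *\<^sub>R w - e" unfolding dp_def cp_def e_def by (simp add: algebra_simps)
    also have "\<dots> = - (\<beta> / (a * sq)) *\<^sub>R c" unfolding w_def bdef[symmetric] using bpos
      by (simp add: algebra_simps)
    finally show ?thesis by simp
  qed
  show "(fst (seg_step (c,d)) - snd (seg_step (c,d))) \<bullet> (fst (seg_step (c,d)) - snd (seg_step (c,d))) = \<beta>"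
    unfolding S fst_conv snd_conv diff using apos sqpos
    by (simp add: x_def[symmetric] a2[symmetric] power2_eq_square sq2[symmetric] field_simps)
  define r where "r = d - (z / x) *\<^sub>R c"
  have cr: "c \<bullet> r = 0" unfolding r_def using xpos by (simp add: inner_diff_right x_def z_def)
  have dp_eq: "dp = r + (z / x) *\<^sub>R cp"
    unfolding dp_def cp_def r_def using xpos by (simp add: algebra_simps)
  have cp_eq: "cp = (a / sq) *\<^sub>R c + (x / \<beta>) *\<^sub>R r"
  proof -
    have "cp = (1 - x/\<beta> + x/(a * sq)) *\<^sub>R c + (x/\<beta>) *\<^sub>R d"
      unfolding cp_def w_def e_def by (simp add: algebra_simps)
    also have "\<dots> = (1 - x/\<beta> + x/(a * sq) + (x/\<beta>)*(z/x)) *\<^sub>R c + (x / \<beta>) *\<^sub>R r"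
      unfolding r_def by (simp add: algebra_simps)
    also have "1 - x/\<beta> + x/(a * sq) + (x/\<beta>)*(z/x) = a / sq"
    proof -
      have h1: "(x/\<beta>)*(z/x) = z/\<beta>" using xpos by simp
      have h2: "1 - x/\<beta> + z/\<beta> = 0" using bpos bdef by (simp add: field_simps)
      have h3: "x/(a * sq) = a/sq" using apos a2 by (auto simp: power2_eq_square)
      show ?thesis using h1 h2 h3 by simp
    qed
    finally show ?thesis .
  qed
  have "gram dp cp = gram cp dp" by (rule gram_sym)
  also have "\<dots> = gram cp r" unfolding dp_eq by (simp add: add.commute gram_shift)
  also have "\<dots> = (a/sq)^2 * gram c r" unfolding cp_eq using cr by (rule gram_comb)
  also have "gram c r = gram c d" unfolding r_def
    using gram_shift[of c "d - (z/x) *\<^sub>R c" "z/x"] by simp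
  also have "(a/sq)^2 = x / \<beta>" using a2 sq2 by (simp add: power_divide)
  finally show "gram (fst (seg_step (c,d))) (snd (seg_step (c,d))) = (x / \<beta>) * gram c d"
    unfolding S by simp
  show "\<beta> \<ge> x" "x > 0" using bge xpos by auto
qed


definition phi :: "('a::real_inner) \<times> 'a \<Rightarrow> real" where
  "phi p = ((fst p - snd p) \<bullet> (fst p - snd p))^2 / gram (fst p) (snd p)"

lemma step_decr:
  fixes c d :: "'a::real_inner"
  assumes G: "gram c d > 0" and z: "c \<bullet> d \<le> 0"
  shows "gram (fst (seg_step (c,d))) (snd (seg_step (c,d))) > 0"
    "phi (seg_step (c,d)) \<le> phi (c,d) - 1"
proof -
  define x where "x = c \<bullet> c"
  define zz where "zz = c \<bullet> d"
  define y where "y = d \<bullet> d"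
  define \<beta> where "\<beta> = c \<bullet> (c - d)"
  define D where "D = (c - d) \<bullet> (c - d)"
  define g where "g = gram c d"
  note F = step_facts[OF G z, folded x_def zz_def \<beta>_def]
  have bx: "\<beta> \<ge> x" and xp: "x > 0" using F by auto
  have gp: "g > 0" using G g_def by simp
  show G': "gram (fst (seg_step (c,d))) (snd (seg_step (c,d))) > 0"
    using F(2) bx xp G by simp
  have bd: "\<beta> = x - zz" unfolding \<beta>_def x_def zz_def by (simp add: inner_diff_right)
  have Dd: "D = x - 2*zz + y" unfolding D_def x_def zz_def y_def
    by (simp add: inner_diff_right inner_diff_left inner_commute)
  have gd: "g = x*y - zz^2" unfolding g_def gram_def x_def y_def zz_def by simp
  have xD: "x * D = \<beta>^2 + g" unfolding Dd gd bd by (simp add: algebra_simps power2_eq_square)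
  have phi1: "phi (seg_step (c,d)) = \<beta>^3 / (x * g)"
    unfolding phi_def F(1) F(2) g_def using bx xp by (simp add: field_simps power2_eq_square power3_eq_cube)
  have phi0: "phi (c,d) = D^2 / g" unfolding phi_def D_def g_def by simp
  have key: "x * \<beta>^3 + x^2 * g \<le> (\<beta>^2 + g)^2"
  proof -
    have "\<beta>^3 * (\<beta> - x) \<ge> 0" using bx xp by simp
    moreover have "g * (\<beta>^2 - x^2) \<ge> 0" using bx xp gp by (simp add: power_mono)
    moreover have "g^2 \<ge> 0" by simp
    moreover have "g * \<beta>^2 \<ge> 0" using gp by simp
    moreover have "(\<beta>^2 + g)^2 - (x * \<beta>^3 + x^2 * g) = \<beta>^3 * (\<beta> - x) + g * (\<beta>^2 - x^2) + g^2 + g * \<beta>^2"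
      by (simp add: algebra_simps power2_eq_square power3_eq_cube)
    ultimately show ?thesis by linarith
  qed
  have "\<beta>^3 \<le> x * D^2 - x * g"
  proof -
    have "x * (x * D^2 - x*g) = (x*D)^2 - x^2 * g" by (simp add: algebra_simps power2_eq_square)
    also have "\<dots> = (\<beta>^2+g)^2 - x^2*g" using xD by simp
    finally have "x * (x * D^2 - x*g) \<ge> x * \<beta>^3" using key by simp
    then show ?thesis using xp by simp
  qed
  then have "\<beta>^3 / (x*g) \<le> (x * D^2 - x * g) / (x*g)" using xp gp
    by (simp add: divide_right_mono)
  also have "\<dots> = D^2/g - 1" using xp gp by (simp add: field_simps)
  finally show "phi (seg_step (c,d)) \<le> phi (c,d) - 1" using phi1 phi0 by simp
qed

lemma seg_iter_Suc: "seg_iter (Suc j) p = seg_step (seg_iter j p)"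
  by (simp add: seg_iter_def)

lemma iter_bound:
  fixes c d :: "'a::real_inner"
  assumes G: "gram c d > 0"
  shows "(\<forall>j<k. fst (seg_iter j (c, d)) \<bullet> snd (seg_iter j (c, d)) \<le> 0) \<Longrightarrow>
     gram (fst (seg_iter k (c,d))) (snd (seg_iter k (c,d))) > 0 \<and> phi (seg_iter k (c,d)) \<le> phi (c,d) - real k"
proof (induction k)
  case 0
  then show ?case using G by (simp add: seg_iter_def)
next
  case (Suc k)
  then have IH: "gram (fst (seg_iter k (c,d))) (snd (seg_iter k (c,d))) > 0 \<and> phi (seg_iter k (c,d)) \<le> phi (c,d) - real k"
    by simp
  have dk: "fst (seg_iter k (c, d)) \<bullet> snd (seg_iter k (c, d)) \<le> 0" using Suc.prems by simp
  obtain u v where uv: "seg_iter k (c,d) = (u,v)" by (cases "seg_iter k (c,d)")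
  have "gram u v > 0" "u \<bullet> v \<le> 0" using IH dk uv by auto
  note S = step_decr[OF this]
  show ?case unfolding seg_iter_Suc uv using S IH uv by auto
qed

lemma phi_nonneg: "gram (fst p) (snd p) > 0 \<Longrightarrow> phi p \<ge> 0"
  unfolding phi_def by simp


theorem mainTheorem11:
  fixes c d :: "real ^ 'n"
  assumes "c \<noteq> 0" and "d \<noteq> 0" and "c \<noteq> d"
    and "0 \<notin> closed_segment c d"
  shows "\<exists>k::nat.
           (\<forall>j<k. fst (seg_iter j (c, d)) \<bullet> snd (seg_iter j (c, d)) \<le> 0)
         \<and> fst (seg_iter k (c, d)) \<bullet> snd (seg_iter k (c, d)) > 0
         \<and> real k \<le> (norm (c - d)) ^ 4 / ((norm c)^2 * (norm d)^2 - (c \<bullet> d)^2)"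
proof -
  have gram_eq: "gram c d = (norm c)^2 * (norm d)^2 - (c \<bullet> d)^2"
    unfolding gram_def by (simp add: power2_norm_eq_inner)
  have phi_eq: "phi (c,d) = (norm (c - d)) ^ 4 / ((norm c)^2 * (norm d)^2 - (c \<bullet> d)^2)"
    unfolding phi_def gram_eq[symmetric]
    by (simp add: power2_norm_eq_inner[symmetric] power_mult[symmetric])
  have cs: "\<bar>c \<bullet> d\<bar> \<le> norm c * norm d" by (rule Cauchy_Schwarz_ineq2)
  have gnn: "(c \<bullet> d)^2 \<le> (norm c)^2 * (norm d)^2"
    using power_mono[OF cs abs_ge_zero[of "c \<bullet> d"], of 2] by (simp add: power_mult_distrib)
  show ?thesis
  proof (cases "c \<bullet> d > 0")
    case True
    then show ?thesis using gnn
      by (intro exI[of _ 0]) (simp add: seg_iter_def)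
  next
    case False
    then have z: "c \<bullet> d \<le> 0" by simp
    have G: "gram c d > 0"
    proof (rule ccontr)
      assume "\<not> gram c d > 0"
      then have "(c \<bullet> d)^2 = (norm c)^2 * (norm d)^2" using gram_eq gnn by simp
      then have "\<bar>c \<bullet> d\<bar> = norm c * norm d"
        by (metis abs_of_nonneg norm_ge_zero power2_eq_iff_nonneg power_mult_distrib real_sqrt_abs zero_le_mult_iff)
      then have cd: "c \<bullet> d = - (norm c * norm d)" using z by simp
      have "(norm d *\<^sub>R c + norm c *\<^sub>R d) \<bullet> (norm d *\<^sub>R c + norm c *\<^sub>R d) = 0"
      proof -
        have "(norm d *\<^sub>R c + norm c *\<^sub>R d) \<bullet> (norm d *\<^sub>R c + norm c *\<^sub>R d)
             = (norm d)^2 * (c \<bullet> c) + 2*(norm c * norm d)*(c \<bullet> d) + (norm c)^2*(d \<bullet> d)"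
          by (simp add: inner_add inner_commute algebra_simps power2_eq_square)
        also have "\<dots> = 0" using cd by (simp add: power2_norm_eq_inner[symmetric] algebra_simps power2_eq_square)
        finally show ?thesis .
      qed
      then have zero: "norm d *\<^sub>R c + norm c *\<^sub>R d = 0" by simp
      define u where "u = norm c / (norm c + norm d)"
      have pos: "norm c + norm d > 0" using assms(1) by (simp add: add_pos_nonneg)
      have u1: "1 - u = norm d / (norm c + norm d)" unfolding u_def using pos by (simp add: field_simps)
      have "(1 - u) *\<^sub>R c + u *\<^sub>R d = (1 / (norm c + norm d)) *\<^sub>R (norm d *\<^sub>R c + norm c *\<^sub>R d)"
      proof -
        have "(1-u) *\<^sub>R c = (1 / (norm c + norm d)) *\<^sub>R (norm d *\<^sub>R c)" using u1 by simp
        moreover have "u *\<^sub>R d = (1 / (norm c + norm d)) *\<^sub>R (norm c *\<^sub>R d)" by (simp add: u_def)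
        ultimately show ?thesis by (metis scaleR_add_right)
      qed
      also have "\<dots> = 0" using zero by simp
      finally have comb: "0 = (1 - u) *\<^sub>R c + u *\<^sub>R d" by simp
      have u0: "0 \<le> u" unfolding u_def using pos by simp
      have ule: "u \<le> 1" unfolding u_def using pos by simp
      have "0 \<in> closed_segment c d"
        unfolding in_segment(1) using u0 ule comb by blast
      then show False using assms(4) by simp
    qed
    let ?P = "\<lambda>n. fst (seg_iter n (c, d)) \<bullet> snd (seg_iter n (c, d)) > 0"
    have bnd: "real k \<le> phi (c,d)" if "\<forall>j<k. \<not> ?P j" for k
    proof -
      have "\<forall>j<k. fst (seg_iter j (c, d)) \<bullet> snd (seg_iter j (c, d)) \<le> 0" using that by (auto simp: not_less)
      from iter_bound[OF G this] phi_nonneg[of "seg_iter k (c,d)"] show ?thesis by auto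
    qed
    have ex: "\<exists>n. ?P n"
    proof (rule ccontr)
      assume "\<not> (\<exists>n. ?P n)"
      then have "real (nat (ceiling (phi (c,d))) + 1) \<le> phi (c,d)" using bnd by blast
      moreover have "phi (c,d) \<le> real (nat (ceiling (phi (c,d))))"
        by linarith
      ultimately show False by simp
    qed
    define k where "k = (LEAST n. ?P n)"
    have Pk: "?P k" unfolding k_def using ex by (rule LeastI_ex)
    have pre: "\<forall>j<k. \<not> ?P j" unfolding k_def using not_less_Least by blast
    show ?thesis
      using Pk pre bnd[OF pre] phi_eq by (intro exI[of _ k]) (auto simp: not_less)
  qed
qed

end
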